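(* Let $\mathcal{M}=(S,P,E,s_{init},L)$ be a CTMC with absorbing goal state $g$, let $\varepsilon,\delta\geq0$, $q=\max_{p\in S}E(p)$ and $t\geq0$. For all $s,s'\in S$ with $s\sim_{\varepsilon,\delta}s'$, $$\left|\mathrm{Pr}_s(\lozenge^{\leq t}g)-\mathrm{Pr}_{s'}(\lozenge^{\leq t}g)\right|\leq 1-e^{-q t(e^{\delta}(1+\varepsilon)-1)}.$$
   Context: A CTMC $(S,P,E,s_{init},L)$: finite $S$, $P\colon S\to\mathrm{Distr}(S)$ ($P(s,A)=\sum_{a\in A}P(s,a)$), $E\colon S\to\mathbb{R}_{>0}$, initial state, labeling $L$; residence time in $s$ is exponential with rate $E(s)$, then a jump to $s'$ with probability $P(s,s')$. $\mathrm{Pr}_s(\lozenge^{\leq t}g)$: probability that the CTMC started in $s$ reaches $g$ within time $t$. For $R\subseteq S\times S$, $R(A)=\{t'\mid\exists a\in A:(a,t')\in R\}$. A reflexive symmetric $R$ is an $(\varepsilon,\delta)$-bisimulation if for all $(s,s')\in R$: $L(s)=L(s')$, $|\ln E(s)-\ln E(s')|\leq\delta$, and $P(s,A)\leq P(s',R(A))+\varepsilon$ for all $A\subseteq S$; $s\sim_{\varepsilon,\delta}s'$ if some such relation contains $(s,s')$. Standing assumption: $g$ is the unique goal state, absorbing and uniquely labeled, and all states from which $g$ is unreachable are collapsed into one absorbing uniquely labeled fail state. *)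

theory Defs
  imports "HOL-Probability.Probability"
begin

text \<open>A CTMC over the finite state type 's: jump distribution P, exit rates E, labeling L.
  P(s,A) is measure_pmf.prob (P s) A.\<close>

definition ctmc :: "('s::finite \<Rightarrow> 's pmf) \<Rightarrow> ('s \<Rightarrow> real) \<Rightarrow> bool" where
  "ctmc P E \<longleftrightarrow> (\<forall>s. E s > 0)"

definition step_rel :: "('s \<Rightarrow> 's pmf) \<Rightarrow> ('s \<times> 's) set" where
  "step_rel P = {(s, s'). s' \<in> set_pmf (P s)}"

text \<open>Standing assumption: g is the unique goal state, absorbing and uniquely labeled,
  and all states from which g is unreachable are collapsed into one absorbing,
  uniquely labeled fail state.\<close>
definition standing_assumption ::
  "('s \<Rightarrow> 's pmf) \<Rightarrow> ('s \<Rightarrow> 'l) \<Rightarrow> 's \<Rightarrow> bool" where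
  "standing_assumption P L g \<longleftrightarrow>
     P g = return_pmf g \<and> (\<forall>s. L s = L g \<longrightarrow> s = g) \<and>
     (\<forall>f. (f, g) \<notin> (step_rel P)\<^sup>* \<longrightarrow>
          P f = return_pmf f \<and> (\<forall>s. L s = L f \<longrightarrow> s = f)
          \<and> (\<forall>f'. (f', g) \<notin> (step_rel P)\<^sup>* \<longrightarrow> f' = f))"

text \<open>Probability to reach g within time t using at most n jumps
  (first-jump decomposition: sojourn time x ~ Exp(E s), then jump according to P s).\<close>
fun reach_jumps ::
  "('s::finite \<Rightarrow> 's pmf) \<Rightarrow> ('s \<Rightarrow> real) \<Rightarrow> 's \<Rightarrow> nat \<Rightarrow> 's \<Rightarrow> real \<Rightarrow> real" where
  "reach_jumps P E g 0 s t = (if s = g then 1 else 0)"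
| "reach_jumps P E g (Suc n) s t =
     (if s = g then 1 else
        (LINT x|lborel. indicator {0..t} x * (E s * exp (- E s * x)) *
           (\<Sum>s'\<in>UNIV. pmf (P s) s' * reach_jumps P E g n s' (t - x))))"

text \<open>Pr_s(<>^{<=t} g): probability of reaching g within time t, the supremum over the
  number of jumps (the event is the increasing union of the events "within n jumps").\<close>
definition reach_prob ::
  "('s::finite \<Rightarrow> 's pmf) \<Rightarrow> ('s \<Rightarrow> real) \<Rightarrow> 's \<Rightarrow> 's \<Rightarrow> real \<Rightarrow> real" where
  "reach_prob P E g s t = (SUP n. reach_jumps P E g n s t)"

definition eps_delta_bisim ::
  "('s \<Rightarrow> 's pmf) \<Rightarrow> ('s \<Rightarrow> real) \<Rightarrow> ('s \<Rightarrow> 'l) \<Rightarrow> real \<Rightarrow> real \<Rightarrow> ('s \<times> 's) set \<Rightarrow> bool" where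
  "eps_delta_bisim P E L \<epsilon> \<delta> R \<longleftrightarrow> refl R \<and> sym R \<and>
     (\<forall>(s, s') \<in> R. L s = L s' \<and> \<bar>ln (E s) - ln (E s')\<bar> \<le> \<delta> \<and>
        (\<forall>A. measure_pmf.prob (P s) A \<le> measure_pmf.prob (P s') (R `` A) + \<epsilon>))"

definition eps_delta_bisimilar ::
  "('s \<Rightarrow> 's pmf) \<Rightarrow> ('s \<Rightarrow> real) \<Rightarrow> ('s \<Rightarrow> 'l) \<Rightarrow> real \<Rightarrow> real \<Rightarrow> 's \<Rightarrow> 's \<Rightarrow> bool" where
  "eps_delta_bisimilar P E L \<epsilon> \<delta> s s' \<longleftrightarrow> (\<exists>R. eps_delta_bisim P E L \<epsilon> \<delta> R \<and> (s, s') \<in> R)"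

end

theory Submission
  imports Defs
begin


lemma layer_aux:
  fixes p p' :: "'s::finite pmf" and w v :: "'s \<Rightarrow> real"
  assumes hP: "\<forall>A. measure_pmf.prob p A \<le> measure_pmf.prob p' (R `` A) + \<epsilon>"
    and he: "\<epsilon> \<ge> 0"
  shows "card {u. w u > 0} = k \<Longrightarrow> (\<forall>u. 0 \<le> w u) \<Longrightarrow> (\<forall>u. w u \<le> M) \<Longrightarrow> (\<forall>u. 0 \<le> v u) \<Longrightarrow>
    (\<forall>u u'. (u,u') \<in> R \<longrightarrow> w u \<le> v u') \<Longrightarrow>
    (\<Sum>u\<in>UNIV. pmf p u * w u) \<le> (\<Sum>u\<in>UNIV. pmf p' u * v u) + \<epsilon> * M"
proof (induction k arbitrary: w v M rule: less_induct)
  case (less k)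
  define S where "S = {u. w u > 0}"
  have Mnn: "M \<ge> 0" using less.prems(2,3) by (meson order.trans)
  have vsum: "(\<Sum>u\<in>UNIV. pmf p' u * v u) \<ge> 0"
    using less.prems(4) by (intro sum_nonneg) (simp add: pmf_nonneg)
  show ?case
  proof (cases "S = {}")
    case True
    then have "\<forall>u. w u = 0" using less.prems(2) unfolding S_def by (metis emptyE less_eq_real_def mem_Collect_eq)
    then show ?thesis using vsum Mnn he by simp
  next
    case False
    define m where "m = Min (w ` S)"
    have fS: "finite S" by simp
    have mS: "m \<in> w ` S" unfolding m_def using False fS by (intro Min_in) auto
    have mpos: "m > 0" using mS unfolding S_def by auto
    have mle: "\<And>u. u \<in> S \<Longrightarrow> m \<le> w u" unfolding m_def using fS by auto
    define w1 where "w1 u = max (w u - m) 0" for u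
    define v1 where "v1 u = max (v u - m) 0" for u
    obtain u0 where u0: "u0 \<in> S" "w u0 = m" using mS by auto
    have sub: "{u. w1 u > 0} \<subseteq> S - {u0}" unfolding w1_def S_def using u0 mpos by auto
    have "card {u. w1 u > 0} < k"
    proof -
      have "card {u. w1 u > 0} \<le> card (S - {u0})" using sub by (intro card_mono) auto
      also have "\<dots> < card S" using u0 fS by (meson card_Diff1_less)
      finally show ?thesis using less.prems(1) S_def by simp
    qed
    then have IH: "(\<Sum>u\<in>UNIV. pmf p u * w1 u) \<le> (\<Sum>u\<in>UNIV. pmf p' u * v1 u) + \<epsilon> * (M - m)"
      apply (rule less.IH[OF _ refl])
      using less.prems u0 unfolding w1_def v1_def by (auto simp: max_def) (metis order.trans less_eq_real_def)+
    have e1: "(\<Sum>u\<in>UNIV. pmf p u * w u) = m * measure_pmf.prob p S + (\<Sum>u\<in>UNIV. pmf p u * w1 u)"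
    proof -
      have "pmf p u * w u = m * (if u \<in> S then pmf p u else 0) + pmf p u * w1 u" for u
      proof (cases "0 < w u")
        case True
        with mle[of u] show ?thesis by (simp add: S_def w1_def max_def algebra_simps)
      next
        case False
        with less.prems(2) have "w u = 0" by (meson not_less order.antisym)
        then show ?thesis using mpos by (simp add: S_def w1_def max_def)
      qed
      then have "(\<Sum>u\<in>UNIV. pmf p u * w u) = m * (\<Sum>u\<in>UNIV. if u \<in> S then pmf p u else 0) + (\<Sum>u\<in>UNIV. pmf p u * w1 u)"
        by (simp add: sum.distrib sum_distrib_left)
      also have "(\<Sum>u\<in>UNIV. if u \<in> S then pmf p u else 0) = sum (pmf p) S"
        by (simp add: sum.If_cases)
      finally show ?thesis by (simp add: measure_measure_pmf_finite)
    qed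
    define V where "V = {u. v u \<ge> m}"
    have e2: "(\<Sum>u\<in>UNIV. pmf p' u * v u) \<ge> m * measure_pmf.prob p' V + (\<Sum>u\<in>UNIV. pmf p' u * v1 u)"
    proof -
      have "\<And>u. pmf p' u * v u \<ge> m * (if u \<in> V then pmf p' u else 0) + pmf p' u * v1 u"
        using less.prems(4) mpos unfolding v1_def V_def
        by (auto simp: max_def algebra_simps pmf_nonneg mult_left_mono)
      then have "(\<Sum>u\<in>UNIV. pmf p' u * v u) \<ge> (\<Sum>u\<in>UNIV. m * (if u \<in> V then pmf p' u else 0) + pmf p' u * v1 u)"
        by (intro sum_mono) auto
      also have "(\<Sum>u\<in>UNIV. m * (if u \<in> V then pmf p' u else 0) + pmf p' u * v1 u) = m * (\<Sum>u\<in>UNIV. if u \<in> V then pmf p' u else 0) + (\<Sum>u\<in>UNIV. pmf p' u * v1 u)"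
        by (simp add: sum.distrib sum_distrib_left)
      also have "(\<Sum>u\<in>UNIV. if u \<in> V then pmf p' u else 0) = sum (pmf p') V"
        by (simp add: sum.If_cases)
      finally show ?thesis by (simp add: measure_measure_pmf_finite)
    qed
    have "R `` S \<subseteq> V" using less.prems(5) mle unfolding V_def by (auto intro: order.trans)
    then have "measure_pmf.prob p' (R `` S) \<le> measure_pmf.prob p' V"
      by (intro measure_pmf.finite_measure_mono) auto
    then have pS: "measure_pmf.prob p S \<le> measure_pmf.prob p' V + \<epsilon>" using hP by (meson add_right_mono order.trans)
    have "m * measure_pmf.prob p S \<le> m * (measure_pmf.prob p' V + \<epsilon>)"
      using pS mpos by (intro mult_left_mono) auto
    then show ?thesis using e1 e2 IH by (simp add: algebra_simps)
  qed
qed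



lemma int_F:
  fixes h :: "real \<Rightarrow> real"
  assumes hm: "h \<in> borel_measurable borel" and hb: "\<And>y. \<bar>h y\<bar> \<le> 1" and a: "a \<ge> 0"
  shows "integrable lborel (\<lambda>x. indicator {0..t} x * (a * exp (- a * x)) * h (t - x))"
proof (rule Bochner_Integration.integrable_bound[where f="\<lambda>x. a * indicator {0..t} x :: real"])
  show "integrable lborel (\<lambda>x. a * indicator {0..t} x :: real)"
    using borel_integrable_atLeastAtMost[of 0 t "\<lambda>x. a"] by simp
  show "(\<lambda>x. indicator {0..t} x * (a * exp (- a * x)) * h (t - x)) \<in> borel_measurable lborel"
    using hm by measurable
  show "AE x in lborel. norm (indicator {0..t} x * (a * exp (- a * x)) * h (t - x)) \<le> norm (a * indicator {0..t} x :: real)"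
  proof (intro AE_I2)
    fix x :: real
    show "norm (indicator {0..t} x * (a * exp (- a * x)) * h (t - x)) \<le> norm (a * indicator {0..t} x :: real)"
    proof (cases "x \<in> {0..t}")
      case True
      then have "exp (- a * x) \<le> 1" using a by auto
      moreover have "\<bar>h (t-x)\<bar> \<le> 1" using hb .
      ultimately have "a * exp (- a * x) * \<bar>h (t - x)\<bar> \<le> a * 1 * 1"
        using a by (intro mult_mono) auto
      then show ?thesis using True a by (simp add: abs_mult)
    qed simp
  qed
qed

lemma FTC_T:
  fixes a b c k t :: real
  assumes t: "t \<ge> 0"
  shows "(LINT x|lborel. indicator {0..t} x * ((b - (b-c)*exp(-c*(t-x)))*exp(-b*x) + k*(a*exp(-a*x) - b*exp(-b*x))))
     = 1 - exp (-c*t) + k * (exp (-b*t) - exp(-a*t))"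
proof -
  define T where "T x = (b - (b-c)*exp(-c*(t-x)))*exp(-b*x) + k*(a*exp(-a*x) - b*exp(-b*x))" for x
  define \<Phi> where "\<Phi> x = exp(-c*(t-x))*exp(-b*x) - exp(-b*x) + k*(exp(-b*x) - exp(-a*x))" for x
  have "(LINT x|lborel. indicator {0..t} x *\<^sub>R T x) = \<Phi> t - \<Phi> 0"
  proof (rule integral_FTC_atLeastAtMost[OF t])
    show "continuous_on {0..t} T" unfolding T_def by (intro continuous_intros)
    fix x assume "0 \<le> x" "x \<le> t"
    have "(\<Phi> has_real_derivative T x) (at x within {0..t})"
      unfolding \<Phi>_def T_def
      by (rule derivative_eq_intros refl | simp)+ (simp add: algebra_simps)
    then show "(\<Phi> has_vector_derivative T x) (at x within {0..t})"
      by (simp add: has_real_derivative_iff_has_vector_derivative)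
  qed
  also have "\<Phi> t - \<Phi> 0 = 1 - exp (-c*t) + k * (exp (-b*t) - exp(-a*t))"
    unfolding \<Phi>_def by (simp add: algebra_simps)
  finally show ?thesis unfolding T_def by simp
qed



lemma FTC_exp:
  fixes a t :: real
  assumes "t \<ge> 0"
  shows "(LINT x|lborel. indicator {0..t} x * (a * exp (- a * x)) * 1) = 1 - exp (- a * t)"
  using FTC_T[OF assms, where a=a and b=a and c=a and k=0] by (simp add: mult.assoc)

lemma Phi_props:
  fixes h :: "real \<Rightarrow> real"
  assumes hm: "mono h" and hb: "\<And>y. 0 \<le> h y \<and> h y \<le> 1" and a: "a > 0"
  shows "0 \<le> (LINT x|lborel. indicator {0..t} x * (a * exp (- a * x)) * h (t - x))"
    and "(LINT x|lborel. indicator {0..t} x * (a * exp (- a * x)) * h (t - x)) \<le> 1"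
    and "mono (\<lambda>t. LINT x|lborel. indicator {0..t} x * (a * exp (- a * x)) * h (t - x))"
proof -
  have meas: "h \<in> borel_measurable borel" using hm by (rule borel_measurable_mono)
  have hb': "\<And>y. \<bar>h y\<bar> \<le> 1" using hb by (simp add: abs_le_iff)
  have I: "\<And>t. integrable lborel (\<lambda>x. indicator {0..t} x * (a * exp (- a * x)) * h (t - x))"
    using int_F[OF meas hb'] a by simp
  show "0 \<le> (LINT x|lborel. indicator {0..t} x * (a * exp (- a * x)) * h (t - x))"
    using hb a by (intro Bochner_Integration.integral_nonneg mult_nonneg_nonneg) auto
  show "(LINT x|lborel. indicator {0..t} x * (a * exp (- a * x)) * h (t - x)) \<le> 1"
  proof (cases "t \<ge> 0")
    case True
    have "(LINT x|lborel. indicator {0..t} x * (a * exp (- a * x)) * h (t - x))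
        \<le> (LINT x|lborel. indicator {0..t} x * (a * exp (- a * x)) * 1)"
    proof (rule integral_mono[OF I])
      show "integrable lborel (\<lambda>x. indicator {0..t} x * (a * exp (- a * x)) * 1)"
        using int_F[of "\<lambda>_. 1" a t] a by simp
      fix x show "indicator {0..t} x * (a * exp (- a * x)) * h (t - x) \<le> indicator {0..t} x * (a * exp (- a * x)) * 1"
        using hb a by (intro mult_left_mono) (auto simp: indicator_def)
    qed
    also have "\<dots> = 1 - exp (- a * t)" using FTC_exp[OF True] .
    finally show ?thesis by (smt (verit) exp_gt_zero)
  next
    case False
    then have "\<And>x. indicator {0..t} x = (0::real)" by (simp add: indicator_def)
    then show ?thesis by simp
  qed
  show "mono (\<lambda>t. LINT x|lborel. indicator {0..t} x * (a * exp (- a * x)) * h (t - x))"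
  proof (rule monoI)
    fix t t' :: real assume tt: "t \<le> t'"
    show "(LINT x|lborel. indicator {0..t} x * (a * exp (- a * x)) * h (t - x))
        \<le> (LINT x|lborel. indicator {0..t'} x * (a * exp (- a * x)) * h (t' - x))"
    proof (rule integral_mono[OF I I])
      fix x
      show "indicator {0..t} x * (a * exp (- a * x)) * h (t - x) \<le> indicator {0..t'} x * (a * exp (- a * x)) * h (t' - x)"
      proof (cases "x \<in> {0..t}")
        case True
        then have "h (t - x) \<le> h (t' - x)" using tt by (intro monoD[OF hm]) simp
        then show ?thesis using True tt a by (simp add: indicator_def)
      next
        case False
        then have "indicator {0..t} x = (0::real)" by simp
        moreover have "0 \<le> indicator {0..t'} x * (a * exp (- a * x)) * h (t' - x)"
          using hb a by (intro mult_nonneg_nonneg) auto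
        ultimately show ?thesis by simp
      qed
    qed
  qed
qed

lemma pointwise_le:
  fixes a b c \<epsilon> H H' ea eb ec :: real
  assumes a: "a > 0" and b: "b > 0" and H: "0 \<le> H" "H \<le> 1" "0 \<le> H'" "H' \<le> 1"
    and d: "H - H' \<le> 1 - (1 - \<epsilon>) * ec" and ec: "ec > 0"
    and eab: "a \<le> b \<Longrightarrow> 0 \<le> eb \<and> eb \<le> ea" and eba: "b \<le> a \<Longrightarrow> 0 \<le> ea \<and> ea \<le> eb"
    and cab: "a \<le> b \<Longrightarrow> b - c \<le> a * (1 - \<epsilon>)" and cba: "b \<le> a \<Longrightarrow> a - c \<le> b * (1 - \<epsilon>)"
  shows "a \<le> b \<Longrightarrow> a * ea * H - b * eb * H' \<le> (b - (b - c) * ec) * eb + 1 * (a * ea - b * eb)"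
    and "b < a \<Longrightarrow> a * ea * H - b * eb * H' \<le> (a - (a - c) * ec) * ea + 0 * (b * eb - a * ea)"
proof -
  assume ab: "a \<le> b"
  have e: "0 \<le> eb" "eb \<le> ea" using eab[OF ab] by auto
  have 1: "a * eb * (H - H') \<le> a * eb * (1 - (1 - \<epsilon>) * ec)"
    using d a e by (intro mult_left_mono) auto
  have 2: "a * (ea - eb) * H \<le> a * (ea - eb)"
    using H a e by (simp add: mult_left_le)
  have 3: "(a - b) * eb * H' \<le> 0" using ab e H by (simp add: mult_nonneg_nonneg mult_nonpos_nonneg)
  have 4: "(b - c - a * (1 - \<epsilon>)) * eb * ec \<le> 0"
    using cab[OF ab] e ec by (simp add: mult_nonpos_nonneg)
  have "a * ea * H - b * eb * H' = a * eb * (H - H') + a * (ea - eb) * H + (a - b) * eb * H'"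
    by (simp add: algebra_simps)
  also have "\<dots> \<le> a * eb * (1 - (1 - \<epsilon>) * ec) + a * (ea - eb)" using 1 2 3 by linarith
  also have "\<dots> \<le> (b - (b - c) * ec) * eb + 1 * (a * ea - b * eb)"
    using 4 by (simp add: algebra_simps)
  finally show "a * ea * H - b * eb * H' \<le> (b - (b - c) * ec) * eb + 1 * (a * ea - b * eb)" .
next
  assume ab: "b < a"
  have e: "0 \<le> ea" "ea \<le> eb" using eba ab by auto
  have 1: "b * ea * (H - H') \<le> b * ea * (1 - (1 - \<epsilon>) * ec)"
    using d b e by (intro mult_left_mono) auto
  have 2: "(a - b) * ea * H \<le> (a - b) * ea"
    using H ab e by (simp add: mult_left_le)
  have 3: "b * (eb - ea) * H' \<ge> 0" using b e H by simp
  have 4: "(a - c - b * (1 - \<epsilon>)) * ea * ec \<le> 0"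
    using cba ab e ec by (simp add: mult_nonpos_nonneg)
  have "a * ea * H - b * eb * H' = b * ea * (H - H') + (a - b) * ea * H - b * (eb - ea) * H'"
    by (simp add: algebra_simps)
  also have "\<dots> \<le> b * ea * (1 - (1 - \<epsilon>) * ec) + (a - b) * ea" using 1 2 3 by linarith
  also have "\<dots> \<le> (a - (a - c) * ec) * ea + 0 * (b * eb - a * ea)"
    using 4 by (simp add: algebra_simps)
  finally show "a * ea * H - b * eb * H' \<le> (a - (a - c) * ec) * ea + 0 * (b * eb - a * ea)" .
qed



lemma key:
  fixes h h' :: "real \<Rightarrow> real" and a b c \<epsilon> t :: real
  assumes hm: "mono h" and hm': "mono h'"
    and hb: "\<And>y. 0 \<le> h y \<and> h y \<le> 1" and hb': "\<And>y. 0 \<le> h' y \<and> h' y \<le> 1"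
    and a: "a > 0" and b: "b > 0" and t: "t \<ge> 0"
    and d: "\<And>\<tau>. 0 \<le> \<tau> \<Longrightarrow> \<tau> \<le> t \<Longrightarrow> h \<tau> - h' \<tau> \<le> 1 - (1 - \<epsilon>) * exp (- c * \<tau>)"
    and cab: "a \<le> b \<Longrightarrow> b - c \<le> a * (1 - \<epsilon>)" and cba: "b \<le> a \<Longrightarrow> a - c \<le> b * (1 - \<epsilon>)"
  shows "(LINT x|lborel. indicator {0..t} x * (a * exp (- a * x)) * h (t - x))
       - (LINT x|lborel. indicator {0..t} x * (b * exp (- b * x)) * h' (t - x)) \<le> 1 - exp (- c * t)"
proof -
  have meas: "h \<in> borel_measurable borel" using hm by (rule borel_measurable_mono)
  have meas': "h' \<in> borel_measurable borel" using hm' by (rule borel_measurable_mono)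
  have I1: "integrable lborel (\<lambda>x. indicator {0..t} x * (a * exp (- a * x)) * h (t - x))"
    using int_F[OF meas, of a t] hb a by (simp add: abs_le_iff)
  have I2: "integrable lborel (\<lambda>x. indicator {0..t} x * (b * exp (- b * x)) * h' (t - x))"
    using int_F[OF meas', of b t] hb' b by (simp add: abs_le_iff)
  define T where "T x = (if a \<le> b then (b - (b-c)*exp(-c*(t-x)))*exp(-b*x) + 1*(a*exp(-a*x) - b*exp(-b*x))
     else (a - (a-c)*exp(-c*(t-x)))*exp(-a*x) + 0*(b*exp(-b*x) - a*exp(-a*x)))" for x
  have IT: "integrable lborel (\<lambda>x. indicator {0..t} x * T x)"
  proof -
    have "integrable lborel (\<lambda>x. T x * indicator {0..t} x)"
      by (rule borel_integrable_atLeastAtMost, cases "a \<le> b")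
        (simp_all only: T_def[abs_def] if_True if_False, (intro continuous_intros)+)
    then show ?thesis by (simp add: mult.commute)
  qed
  have VT: "(LINT x|lborel. indicator {0..t} x * T x) \<le> 1 - exp (- c * t)"
  proof (cases "a \<le> b")
    case True
    then have "(LINT x|lborel. indicator {0..t} x * T x) = 1 - exp (-c*t) + 1 * (exp (-b*t) - exp(-a*t))"
      unfolding T_def using FTC_T[OF t, where a=a and b=b and c=c and k=1] by simp
    moreover have "exp (-b*t) \<le> exp(-a*t)" using True t by (simp add: mult_right_mono)
    ultimately show ?thesis by simp
  next
    case False
    then have "(LINT x|lborel. indicator {0..t} x * T x) = 1 - exp (-c*t) + 0 * (exp (-a*t) - exp(-b*t))"
      unfolding T_def using FTC_T[OF t, where a=b and b=a and c=c and k=0] by simp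
    then show ?thesis by simp
  qed
  have "(LINT x|lborel. indicator {0..t} x * (a * exp (- a * x)) * h (t - x))
       - (LINT x|lborel. indicator {0..t} x * (b * exp (- b * x)) * h' (t - x))
     = (LINT x|lborel. indicator {0..t} x * (a * exp (- a * x)) * h (t - x) - indicator {0..t} x * (b * exp (- b * x)) * h' (t - x))"
    using I1 I2 by simp
  also have "\<dots> \<le> (LINT x|lborel. indicator {0..t} x * T x)"
  proof (rule integral_mono)
    show "integrable lborel (\<lambda>x. indicator {0..t} x * (a * exp (- a * x)) * h (t - x) - indicator {0..t} x * (b * exp (- b * x)) * h' (t - x))"
      using I1 I2 by simp
    show "integrable lborel (\<lambda>x. indicator {0..t} x * T x)" by (rule IT)
    fix x
    show "indicator {0..t} x * (a * exp (- a * x)) * h (t - x) - indicator {0..t} x * (b * exp (- b * x)) * h' (t - x) \<le> indicator {0..t} x * T x"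
    proof (cases "x \<in> {0..t}")
      case True
      then have x: "0 \<le> x" "x \<le> t" by auto
      have dd: "h (t - x) - h' (t - x) \<le> 1 - (1 - \<epsilon>) * exp (- c * (t - x))" using d x by simp
      have eab: "a \<le> b \<Longrightarrow> 0 \<le> exp (- b * x) \<and> exp (- b * x) \<le> exp (- a * x)"
        using x by (simp add: mult_right_mono)
      have eba: "b \<le> a \<Longrightarrow> 0 \<le> exp (- a * x) \<and> exp (- a * x) \<le> exp (- b * x)"
        using x by (simp add: mult_right_mono)
      note P = pointwise_le[OF a b conjunct1[OF hb] conjunct2[OF hb] conjunct1[OF hb'] conjunct2[OF hb'] dd exp_gt_zero eab eba cab cba]
      show ?thesis
      proof (cases "a \<le> b")
        case True
        then show ?thesis using P(1)[OF True] \<open>x \<in> {0..t}\<close> unfolding T_def by (simp add: mult.assoc)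
      next
        case False
        then show ?thesis using P(2) \<open>x \<in> {0..t}\<close> unfolding T_def by (simp add: mult.assoc)
      qed
    next
      case False
      then show ?thesis by simp
    qed
  qed
  also have "\<dots> \<le> 1 - exp (- c * t)" by (rule VT)
  finally show ?thesis .
qed



lemma layer2:
  fixes p p' :: "'s::finite pmf" and v :: "'s \<Rightarrow> real"
  assumes hP: "\<forall>A. measure_pmf.prob p A \<le> measure_pmf.prob p' (R `` A) + \<epsilon>"
    and he: "\<epsilon> \<ge> 0" and hv: "\<forall>u. 0 \<le> v u \<and> v u \<le> 1" and eta: "0 \<le> \<eta>" "\<eta> \<le> 1"
    and hR: "\<forall>u u'. (u,u') \<in> R \<longrightarrow> v u - \<eta> \<le> v u'"
  shows "(\<Sum>u\<in>UNIV. pmf p u * v u) \<le> (\<Sum>u\<in>UNIV. pmf p' u * v u) + (1 - (1 - \<epsilon>) * (1 - \<eta>))"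
proof -
  define w where "w u = max (v u - \<eta>) 0" for u
  have L: "(\<Sum>u\<in>UNIV. pmf p u * w u) \<le> (\<Sum>u\<in>UNIV. pmf p' u * v u) + \<epsilon> * (1 - \<eta>)"
    by (rule layer_aux[OF hP he refl]) (use hv hR eta in \<open>auto simp: w_def\<close>)
  have "(\<Sum>u\<in>UNIV. pmf p u * v u) \<le> (\<Sum>u\<in>UNIV. pmf p u * \<eta> + pmf p u * w u)"
  proof (intro sum_mono)
    fix u
    have "v u \<le> \<eta> + w u" by (simp add: w_def)
    then have "pmf p u * v u \<le> pmf p u * (\<eta> + w u)" by (intro mult_left_mono) auto
    then show "pmf p u * v u \<le> pmf p u * \<eta> + pmf p u * w u" by (simp add: distrib_left)
  qed
  also have "\<dots> = \<eta> * (\<Sum>u\<in>UNIV. pmf p u) + (\<Sum>u\<in>UNIV. pmf p u * w u)"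
    by (simp add: sum.distrib sum_distrib_left mult.commute)
  also have "(\<Sum>u\<in>UNIV. pmf p u) = 1" by (simp add: sum_pmf_eq_1)
  finally show ?thesis using L by (simp add: algebra_simps)
qed



lemma rj_props:
  assumes "ctmc P E"
  shows "(\<forall>t. 0 \<le> reach_jumps P E g n s t \<and> reach_jumps P E g n s t \<le> 1) \<and> mono (\<lambda>t. reach_jumps P E g n s t)"
proof (induction n arbitrary: s)
  case 0
  then show ?case by (simp add: monoI)
next
  case (Suc n)
  show ?case
  proof (cases "s = g")
    case True
    then show ?thesis by (simp add: monoI)
  next
    case False
    define H where "H \<tau> = (\<Sum>s'\<in>UNIV. pmf (P s) s' * reach_jumps P E g n s' \<tau>)" for \<tau>
    have eq: "reach_jumps P E g (Suc n) s t = (LINT x|lborel. indicator {0..t} x * (E s * exp (- E s * x)) * H (t - x))" for t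
      using False by (simp add: H_def)
    have Hm: "mono H"
    proof (rule monoI)
      fix x y :: real assume "x \<le> y"
      then show "H x \<le> H y" unfolding H_def using Suc.IH
        by (intro sum_mono mult_left_mono) (auto dest: monoD)
    qed
    have Hb: "0 \<le> H y \<and> H y \<le> 1" for y
    proof
      show "0 \<le> H y" unfolding H_def using Suc.IH by (intro sum_nonneg mult_nonneg_nonneg) auto
      have "H y \<le> (\<Sum>s'\<in>UNIV. pmf (P s) s' * 1)" unfolding H_def using Suc.IH
        by (intro sum_mono mult_left_mono) auto
      also have "\<dots> = 1" by (simp add: sum_pmf_eq_1)
      finally show "H y \<le> 1" .
    qed
    have a: "E s > 0" using assms by (simp add: ctmc_def)
    note PP = Phi_props[OF Hm Hb a]
    show ?thesis unfolding eq using PP by blast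
  qed
qed

lemma rates:
  fixes a b q \<epsilon> \<delta> :: real
  assumes a: "a > 0" and b: "b > 0" and ab: "a \<le> b" and bq: "b \<le> q"
    and l: "\<bar>ln a - ln b\<bar> \<le> \<delta>" and e: "\<epsilon> \<ge> 0" and d: "\<delta> \<ge> 0"
  shows "b - a + a * \<epsilon> \<le> q * (exp \<delta> * (1 + \<epsilon>) - 1)"
proof -
  have "ln a \<ge> ln b - \<delta>" using l by linarith
  then have "a \<ge> exp (ln b - \<delta>)" using a by (metis exp_le_cancel_iff exp_ln)
  then have ab2: "a \<ge> b * exp (- \<delta>)" using b by (simp add: exp_diff exp_minus field_simps)
  have "b - a + a * \<epsilon> \<le> b * (1 - exp (- \<delta>)) + b * \<epsilon>"
  proof -
    have "a * \<epsilon> \<le> b * \<epsilon>" using ab e by (simp add: mult_right_mono)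
    then show ?thesis using ab2 by (simp add: algebra_simps)
  qed
  also have "\<dots> = b * (1 - exp (- \<delta>) + \<epsilon>)" by (simp add: algebra_simps)
  also have "\<dots> \<le> q * (1 - exp (- \<delta>) + \<epsilon>)"
    using bq e d by (intro mult_right_mono) auto
  also have "\<dots> \<le> q * (exp \<delta> * (1 + \<epsilon>) - 1)"
  proof (intro mult_left_mono)
    have "exp (- \<delta>) * exp \<delta> = 1" by (simp add: exp_minus)
    have "1 - exp (- \<delta>) \<le> exp \<delta> - 1"
    proof -
      have "(exp \<delta> - 1) * (1 - exp (-\<delta>)) \<ge> 0" using d by (intro mult_nonneg_nonneg) auto
      have "1 - exp (- \<delta>) = (exp \<delta> - 1) * exp (- \<delta>)" by (simp add: algebra_simps exp_minus)
      also have "\<dots> \<le> (exp \<delta> - 1) * 1" using d by (intro mult_left_mono) auto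
      finally show ?thesis by simp
    qed
    moreover have "1 * \<epsilon> \<le> exp \<delta> * \<epsilon>" using e d by (intro mult_right_mono) auto
    ultimately show "1 - exp (- \<delta>) + \<epsilon> \<le> exp \<delta> * (1 + \<epsilon>) - 1" by (simp add: algebra_simps)
    show "0 \<le> q" using b bq by simp
  qed
  finally show ?thesis .
qed



lemma rj_bisim:
  fixes P :: "'s::finite \<Rightarrow> 's pmf" and E :: "'s \<Rightarrow> real" and L :: "'s \<Rightarrow> 'l"
  assumes ctmc: "ctmc P E" and gu: "\<forall>s. L s = L g \<longrightarrow> s = g"
    and bis: "eps_delta_bisim P E L \<epsilon> \<delta> R" and e: "\<epsilon> \<ge> 0" and d: "\<delta> \<ge> 0"
    and c_def: "c = Max (range E) * (exp \<delta> * (1 + \<epsilon>) - 1)"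
  shows "\<forall>s s' t. (s, s') \<in> R \<longrightarrow> 0 \<le> t \<longrightarrow>
           reach_jumps P E g n s t - reach_jumps P E g n s' t \<le> 1 - exp (- c * t)"
proof -
  have Epos: "\<And>s. E s > 0" using ctmc by (simp add: ctmc_def)
  have Emax: "\<And>s. E s \<le> Max (range E)" by (simp add: Max_ge)
  have "1 * 1 \<le> exp \<delta> * (1 + \<epsilon>)" using d e by (intro mult_mono) auto
  then have cnn: "c \<ge> 0" unfolding c_def using Emax[of g] Epos[of g] by (intro mult_nonneg_nonneg) linarith+
  have Kt: "\<And>t. 0 \<le> t \<Longrightarrow> 0 \<le> 1 - exp (- c * t)" using cnn by (simp add: mult_nonneg_nonneg)
  have Rp: "\<And>s s'. (s, s') \<in> R \<Longrightarrow> L s = L s' \<and> \<bar>ln (E s) - ln (E s')\<bar> \<le> \<delta> \<and>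
        (\<forall>A. measure_pmf.prob (P s) A \<le> measure_pmf.prob (P s') (R `` A) + \<epsilon>)"
    using bis unfolding eps_delta_bisim_def by blast
  have gR: "\<And>s s'. (s, s') \<in> R \<Longrightarrow> (s = g \<longleftrightarrow> s' = g)"
    using Rp gu by metis
  show ?thesis
  proof (induction n)
    case 0
    show ?case using gR Kt by auto
  next
    case (Suc n)
    show ?case
    proof (intro allI impI)
      fix s s' t assume R: "(s, s') \<in> R" and t: "0 \<le> (t::real)"
      show "reach_jumps P E g (Suc n) s t - reach_jumps P E g (Suc n) s' t \<le> 1 - exp (- c * t)"
      proof (cases "s = g")
        case True
        then have "s' = g" using gR R by blast
        then show ?thesis using True Kt t by simp
      next
        case False
        then have F': "s' \<noteq> g" using gR R by blast
        define H where "H \<tau> = (\<Sum>u\<in>UNIV. pmf (P s) u * reach_jumps P E g n u \<tau>)" for \<tau>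
        define H' where "H' \<tau> = (\<Sum>u\<in>UNIV. pmf (P s') u * reach_jumps P E g n u \<tau>)" for \<tau>
        have eq: "reach_jumps P E g (Suc n) s t = (LINT x|lborel. indicator {0..t} x * (E s * exp (- E s * x)) * H (t - x))"
          using False by (simp add: H_def)
        have eq': "reach_jumps P E g (Suc n) s' t = (LINT x|lborel. indicator {0..t} x * (E s' * exp (- E s' * x)) * H' (t - x))"
          using F' by (simp add: H'_def)
        note rp = rj_props[OF ctmc]
        have Hm: "mono H" "mono H'"
          unfolding H_def H'_def using rp
          by (auto intro!: monoI sum_mono mult_left_mono) (metis monoD)+
        have Hb: "0 \<le> H y \<and> H y \<le> 1" "0 \<le> H' y \<and> H' y \<le> 1" for y
        proof -
          have s1: "(\<Sum>u\<in>UNIV. pmf (P x) u * 1) = 1" for x by (simp add: sum_pmf_eq_1)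
          have "0 \<le> H y" unfolding H_def using rp by (intro sum_nonneg mult_nonneg_nonneg) auto
          moreover have "H y \<le> (\<Sum>u\<in>UNIV. pmf (P s) u * 1)" unfolding H_def using rp
            by (intro sum_mono mult_left_mono) auto
          moreover have "0 \<le> H' y" unfolding H'_def using rp by (intro sum_nonneg mult_nonneg_nonneg) auto
          moreover have "H' y \<le> (\<Sum>u\<in>UNIV. pmf (P s') u * 1)" unfolding H'_def using rp
            by (intro sum_mono mult_left_mono) auto
          ultimately show "0 \<le> H y \<and> H y \<le> 1" "0 \<le> H' y \<and> H' y \<le> 1" using s1 by auto
        qed
        have dd: "H \<tau> - H' \<tau> \<le> 1 - (1 - \<epsilon>) * exp (- c * \<tau>)" if "0 \<le> \<tau>" "\<tau> \<le> t" for \<tau>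
        proof -
          have "exp (- c * \<tau>) \<le> 1" using cnn that by (simp add: mult_nonneg_nonneg)
          then have eta: "0 \<le> 1 - exp (- c * \<tau>)" "1 - exp (- c * \<tau>) \<le> 1" by auto
          have "(\<Sum>u\<in>UNIV. pmf (P s) u * reach_jumps P E g n u \<tau>)
              \<le> (\<Sum>u\<in>UNIV. pmf (P s') u * reach_jumps P E g n u \<tau>) + (1 - (1 - \<epsilon>) * (1 - (1 - exp (- c * \<tau>))))"
          proof (rule layer2[OF _ e _ eta])
            show "\<forall>A. measure_pmf.prob (P s) A \<le> measure_pmf.prob (P s') (R `` A) + \<epsilon>" using Rp[OF R] by blast
            show "\<forall>u. 0 \<le> reach_jumps P E g n u \<tau> \<and> reach_jumps P E g n u \<tau> \<le> 1" using rp by blast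
            show "\<forall>u u'. (u, u') \<in> R \<longrightarrow> reach_jumps P E g n u \<tau> - (1 - exp (- c * \<tau>)) \<le> reach_jumps P E g n u' \<tau>"
              using Suc.IH that by fastforce
          qed
          then show ?thesis unfolding H_def H'_def by simp
        qed
        have lnb: "\<bar>ln (E s) - ln (E s')\<bar> \<le> \<delta>" using Rp[OF R] by blast
        have cab: "E s \<le> E s' \<Longrightarrow> E s' - c \<le> E s * (1 - \<epsilon>)"
          using rates[OF Epos Epos _ Emax lnb e d] unfolding c_def by (simp add: algebra_simps)
        have lnb': "\<bar>ln (E s') - ln (E s)\<bar> \<le> \<delta>" using lnb by (simp add: abs_minus_commute)
        have cba: "E s' \<le> E s \<Longrightarrow> E s - c \<le> E s' * (1 - \<epsilon>)"
          using rates[OF Epos Epos _ Emax lnb' e d] unfolding c_def by (simp add: algebra_simps)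
        show ?thesis unfolding eq eq'
          by (rule key[OF Hm(1) Hm(2) Hb(1) Hb(2) Epos Epos t dd cab cba])
      qed
    qed
  qed
qed


theorem proposition3:
  fixes P :: "'s::finite \<Rightarrow> 's pmf" and E :: "'s \<Rightarrow> real" and L :: "'s \<Rightarrow> 'l"
    and s_init g :: 's and \<epsilon> \<delta> t :: real
  assumes "ctmc P E"
    and "standing_assumption P L g"
    and "\<epsilon> \<ge> 0" and "\<delta> \<ge> 0" and "t \<ge> 0"
  shows "\<forall>s s'. eps_delta_bisimilar P E L \<epsilon> \<delta> s s' \<longrightarrow>
           \<bar>reach_prob P E g s t - reach_prob P E g s' t\<bar>
             \<le> 1 - exp (- (Max (range E)) * t * (exp \<delta> * (1 + \<epsilon>) - 1))"
proof (intro allI impI)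
  fix s s' assume "eps_delta_bisimilar P E L \<epsilon> \<delta> s s'"
  then obtain R where bis: "eps_delta_bisim P E L \<epsilon> \<delta> R" and R: "(s, s') \<in> R"
    unfolding eps_delta_bisimilar_def by blast
  have R': "(s', s) \<in> R" using bis R unfolding eps_delta_bisim_def by (meson symD)
  have gu: "\<forall>s. L s = L g \<longrightarrow> s = g" using assms(2) unfolding standing_assumption_def by blast
  define c where "c = Max (range E) * (exp \<delta> * (1 + \<epsilon>) - 1)"
  define K where "K = 1 - exp (- c * t)"
  note B = rj_bisim[OF assms(1) gu bis assms(3,4) c_def]
  have d1: "reach_jumps P E g n s t \<le> reach_jumps P E g n s' t + K" for n
    using B[of n] R assms(5) unfolding K_def by fastforce
  have d2: "reach_jumps P E g n s' t \<le> reach_jumps P E g n s t + K" for n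
    using B[of n] R' assms(5) unfolding K_def by fastforce
  have bdd: "bdd_above (range (\<lambda>n. reach_jumps P E g n x t))" for x
    using rj_props[OF assms(1)] by (intro bdd_aboveI[where M=1]) blast
  have s1: "reach_prob P E g s t \<le> reach_prob P E g s' t + K"
    unfolding reach_prob_def
  proof (rule cSUP_least)
    fix n
    have "reach_jumps P E g n s' t \<le> (SUP n. reach_jumps P E g n s' t)"
      by (rule cSUP_upper[OF _ bdd]) simp
    then show "reach_jumps P E g n s t \<le> (SUP n. reach_jumps P E g n s' t) + K" using d1[of n] by simp
  qed simp
  have s2: "reach_prob P E g s' t \<le> reach_prob P E g s t + K"
    unfolding reach_prob_def
  proof (rule cSUP_least)
    fix n
    have "reach_jumps P E g n s t \<le> (SUP n. reach_jumps P E g n s t)"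
      by (rule cSUP_upper[OF _ bdd]) simp
    then show "reach_jumps P E g n s' t \<le> (SUP n. reach_jumps P E g n s t) + K" using d2[of n] by simp
  qed simp
  have "K = 1 - exp (- (Max (range E)) * t * (exp \<delta> * (1 + \<epsilon>) - 1))"
    unfolding K_def c_def by (simp only: mult_minus_left mult.assoc mult.commute mult.left_commute)
  then show "\<bar>reach_prob P E g s t - reach_prob P E g s' t\<bar>
             \<le> 1 - exp (- (Max (range E)) * t * (exp \<delta> * (1 + \<epsilon>) - 1))"
    using s1 s2 by linarith
qed

end
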